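(* Let $p,q$ be coprime positive integers with $\frac pq<\frac12$, and let $1\le k\le q-2p-2$. Then $P_{k,\frac pq}\triangleleft P_{k+1,\frac pq}$, i.e. $H_2(M_k)>H_2(M_{k+1})$ and $H_2(m_k)>H_2(m_{k+1})$, where $M_r,m_r$ denote the points of absolute maximum and absolute minimum of $P_{r,\frac pq}$.
   Context: $H_2:[0,1]\to[0,1]$ is $H_2(x)=3x$ on $I_0=[0,\frac13]$, $2-3x$ on $I_1=[\frac13,\frac23]$, $3x-2$ on $I_2=[\frac23,1]$. For coprime $p,q$ with $0<\frac pq<\frac12$ and $r\in\{0,1,\dots,q-2p\}$, $\Gamma_{r,\frac pq}$ is the bimodal over-twist pattern whose cyclic permutation $\Pi_{r,\frac pq}$ of $\{1,\dots,q\}$ (action on the points of the cycle labelled $x_1<\dots<x_q$) is: $j\mapsto j+p$ for $1\le j\le r$; $j\mapsto q-j+r+1$ for $r+1\le j\le r+p$; $j\mapsto 2p-j+r+1$ for $r+p+1\le j\le r+2p$; $j\mapsto j-p$ for $r+2p+1\le j\le q$. $P_{r,\frac pq}$ denotes the cycle of $H_2$ exhibiting $\Gamma_{r,\frac pq}$ singled out by the location of its extremal points as follows (the paper asserts it is unique): for $r=0$ and $r=q-2p$ its points $M_r,m_r$ lie in $I_1$, and for $1\le r\le q-2p-1$, $M_r\in I_1$ and $m_r\in I_2$. Here the point of absolute maximum $M_r$ (resp. absolute minimum $m_r$) of a cycle $P$ is the point of $P$ whose image under $H_2$ is the largest (resp. smallest) point of $P$. For two such cycles, $P_{r_2,\frac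 pq}\triangleleft P_{r_1,\frac pq}$ ("$P_{r_2,\frac pq}$ floats above $P_{r_1,\frac pq}$") means $H_2(M_{r_2})>H_2(M_{r_1})$ and $H_2(m_{r_2})>H_2(m_{r_1})$. *)

theory Defs
  imports Complex_Main
begin

definition H2 :: "real \<Rightarrow> real" where
  "H2 x = (if x \<le> 1/3 then 3*x else if x \<le> 2/3 then 2 - 3*x else 3*x - 2)"

definition I0 :: "real set" where "I0 = {0..1/3}"
definition I1 :: "real set" where "I1 = {1/3..2/3}"
definition I2 :: "real set" where "I2 = {2/3..1}"

definition Pi_perm :: "nat \<Rightarrow> nat \<Rightarrow> nat \<Rightarrow> nat \<Rightarrow> nat" where
  "Pi_perm r p q j =
     (if 1 \<le> j \<and> j \<le> r then j + p
      else if r + 1 \<le> j \<and> j \<le> r + p then (q + r + 1) - j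
      else if r + p + 1 \<le> j \<and> j \<le> r + 2*p then (2*p + r + 1) - j
      else j - p)"

definition is_cycle :: "real set \<Rightarrow> nat \<Rightarrow> bool" where
  "is_cycle P q \<longleftrightarrow> finite P \<and> card P = q \<and> P \<noteq> {} \<and> P \<subseteq> {0..1} \<and> H2 ` P = P \<and>
     (\<forall>a\<in>P. \<forall>b\<in>P. \<exists>n. (H2 ^^ n) a = b)"

definition exhibits_pattern :: "real set \<Rightarrow> nat \<Rightarrow> nat \<Rightarrow> nat \<Rightarrow> bool" where
  "exhibits_pattern P r p q \<longleftrightarrow>
     (\<exists>x :: nat \<Rightarrow> real. strict_mono_on {1..q} x \<and> P = x ` {1..q} \<and>
        (\<forall>j\<in>{1..q}. H2 (x j) = x (Pi_perm r p q j)))"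

definition abs_max_pt :: "real set \<Rightarrow> real" where
  "abs_max_pt P = (THE a. a \<in> P \<and> H2 a = Max P)"
definition abs_min_pt :: "real set \<Rightarrow> real" where
  "abs_min_pt P = (THE a. a \<in> P \<and> H2 a = Min P)"

definition is_P :: "nat \<Rightarrow> nat \<Rightarrow> nat \<Rightarrow> real set \<Rightarrow> bool" where
  "is_P r p q P \<longleftrightarrow> is_cycle P q \<and> exhibits_pattern P r p q \<and>
     (if r = 0 \<or> r = q - 2*p
      then abs_max_pt P \<in> I1 \<and> abs_min_pt P \<in> I1
      else abs_max_pt P \<in> I1 \<and> abs_min_pt P \<in> I2)"

definition floats_above :: "real set \<Rightarrow> real set \<Rightarrow> bool" where
  "floats_above P2 P1 \<longleftrightarrow>
     H2 (abs_max_pt P2) > H2 (abs_max_pt P1) \<and> H2 (abs_min_pt P2) > H2 (abs_min_pt P1)"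

end

theory Submission
  imports Defs
begin

lemma H2_lo: "x \<le> 1/3 \<Longrightarrow> H2 x = 3*x" by (simp add: H2_def)
lemma H2_mid: "1/3 \<le> x \<Longrightarrow> x \<le> 2/3 \<Longrightarrow> H2 x = 2 - 3*x" by (auto simp: H2_def)
lemma H2_hi: "2/3 \<le> x \<Longrightarrow> H2 x = 3*x - 2" by (auto simp: H2_def)

lemma Pi_range:
  assumes "1 \<le> j" "j \<le> q" "r + 2*p \<le> q" "0 < p"
  shows "1 \<le> Pi_perm r p q j \<and> Pi_perm r p q j \<le> q"
  using assms by (auto simp: Pi_perm_def)

lemma blocks:
  fixes x :: "nat \<Rightarrow> real"
  assumes p: "0<p" and r1: "1 \<le> r" and rq: "r+2*p+1 \<le> q"
    and mono: "strict_mono_on {1..q} x"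
    and rng: "\<forall>j\<in>{1..q}. 0 \<le> x j \<and> x j \<le> 1"
    and hx: "\<forall>j\<in>{1..q}. H2 (x j) = x (Pi_perm r p q j)"
    and M: "x(r+1) \<in> I1" and m: "x(r+2*p) \<in> I2"
  shows "\<forall>j. 1 \<le> j \<and> j \<le> r \<longrightarrow> x j \<le> 1/3"
    and "\<forall>j. r+1 \<le> j \<and> j \<le> r+2*p-1 \<longrightarrow> 1/3 < x j \<and> x j \<le> 2/3"
    and "\<forall>j. r+2*p \<le> j \<and> j \<le> q \<longrightarrow> 2/3 < x j"
proof -
  have mono': "\<And>i j. 1 \<le> i \<Longrightarrow> i < j \<Longrightarrow> j \<le> q \<Longrightarrow> x i < x j"
    using mono by (auto simp: strict_mono_on_def)
  have inj: "\<And>i j. 1 \<le> i \<Longrightarrow> i \<le> q \<Longrightarrow> 1 \<le> j \<Longrightarrow> j \<le> q \<Longrightarrow> x i = x j \<Longrightarrow> i = j"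
    by (metis linorder_neq_iff mono' order_less_irrefl)
  have le_q: "\<And>i. 1 \<le> i \<Longrightarrow> i \<le> q \<Longrightarrow> x i \<le> x q"
    by (metis le_less mono')
  have ge_1: "\<And>i. 1 \<le> i \<Longrightarrow> i \<le> q \<Longrightarrow> x 1 \<le> x i"
    by (metis le_less mono' order_refl)
  have s1: "Pi_perm r p q 1 = 1 + p" using r1 by (simp add: Pi_perm_def)
  have sq: "Pi_perm r p q q = q - p" using rq p by (simp add: Pi_perm_def)
  have sM: "Pi_perm r p q (r+1) = q" using rq p by (simp add: Pi_perm_def)
  have sm: "Pi_perm r p q (r+2*p) = 1" using rq p by (simp add: Pi_perm_def)
  have x1: "x 1 > 0"
  proof (rule ccontr)
    assume "\<not> x 1 > 0"
    hence "x 1 = 0" using rng[rule_format, of 1] rq by auto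
    hence "H2 (x 1) = x 1" by (simp add: H2_def)
    hence "x (1+p) = x 1" using hx[rule_format, of 1] s1 rq by auto
    hence "1 + p = 1" using inj[of "1+p" 1] rq by force
    thus False using p by simp
  qed
  have xq: "x q < 1"
  proof (rule ccontr)
    assume "\<not> x q < 1"
    hence "x q = 1" using rng[rule_format, of q] rq by auto
    hence "H2 (x q) = x q" by (simp add: H2_def)
    hence "x (q-p) = x q" using hx[rule_format, of q] sq rq by auto
    hence "q - p = q" using inj[of "q-p" q] rq by force
    thus False using p rq by simp
  qed
  have M': "x (r+1) > 1/3"
  proof (rule ccontr)
    assume "\<not> x (r+1) > 1/3"
    hence "x (r+1) = 1/3" using M by (auto simp: I1_def)
    hence "H2 (x (r+1)) = 1" by (simp add: H2_def)
    hence "x q = 1" using hx[rule_format, of "r+1"] sM rq by auto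
    thus False using xq by simp
  qed
  have m': "x (r+2*p) > 2/3"
  proof (rule ccontr)
    assume "\<not> x (r+2*p) > 2/3"
    hence "x (r+2*p) = 2/3" using m by (auto simp: I2_def)
    hence "H2 (x (r+2*p)) = 0" by (simp add: H2_def)
    hence "x 1 = 0" using hx[rule_format, of "r+2*p"] sm rq r1 by auto
    thus False using x1 by simp
  qed
  show "\<forall>j. 1 \<le> j \<and> j \<le> r \<longrightarrow> x j \<le> 1/3"
  proof (intro allI impI)
    fix j assume j: "1 \<le> j \<and> j \<le> r"
    show "x j \<le> 1/3"
    proof (rule ccontr)
      assume c: "\<not> x j \<le> 1/3"
      have lt: "x j < x (r+1)" using mono'[of j "r+1"] j rq by auto
      have "x (r+1) \<le> 2/3" using M by (simp add: I1_def)
      hence "H2 (x j) = 2 - 3 * x j" using c lt by (intro H2_mid) auto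
      moreover have "H2 (x (r+1)) = 2 - 3 * x (r+1)" using M by (intro H2_mid) (auto simp: I1_def)
      ultimately have "H2 (x j) > x q" using lt hx[rule_format, of "r+1"] sM rq by auto
      moreover have "H2 (x j) \<le> x q" using hx[rule_format, of j] j rq le_q Pi_range[of j q r p] p r1 by auto
      ultimately show False by simp
    qed
  qed
  show "\<forall>j. r+1 \<le> j \<and> j \<le> r+2*p-1 \<longrightarrow> 1/3 < x j \<and> x j \<le> 2/3"
  proof (intro allI impI)
    fix j assume j: "r+1 \<le> j \<and> j \<le> r+2*p-1"
    have jq: "j \<le> q" using j rq by linarith
    have a: "x (r+1) \<le> x j" using mono'[of "r+1" j] j jq by (cases "j = r+1") auto
    have lt: "x j < x (r+2*p)" using mono'[of j "r+2*p"] j rq p by auto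
    show "1/3 < x j \<and> x j \<le> 2/3"
    proof
      show "1/3 < x j" using a M' by simp
      show "x j \<le> 2/3"
      proof (rule ccontr)
        assume c: "\<not> x j \<le> 2/3"
        have "H2 (x j) = 3 * x j - 2" using c by (intro H2_hi) auto
        moreover have "H2 (x (r+2*p)) = 3 * x (r+2*p) - 2" using m' by (intro H2_hi) auto
        ultimately have "H2 (x j) < x 1" using lt hx[rule_format, of "r+2*p"] sm rq r1 by auto
        moreover have "H2 (x j) \<ge> x 1" using hx[rule_format, of j] j rq ge_1 Pi_range[of j q r p] p r1 by auto
        ultimately show False by simp
      qed
    qed
  qed
  show "\<forall>j. r+2*p \<le> j \<and> j \<le> q \<longrightarrow> 2/3 < x j"
  proof (intro allI impI)
    fix j assume j: "r+2*p \<le> j \<and> j \<le> q"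
    have "x (r+2*p) \<le> x j" using mono'[of "r+2*p" j] j rq p r1 by (cases "j = r+2*p") auto
    thus "2/3 < x j" using m' by simp
  qed
qed

definition SS :: "nat \<Rightarrow> nat \<Rightarrow> nat \<Rightarrow> nat \<Rightarrow> nat \<Rightarrow> bool" where
  "SS k p q a b \<longleftrightarrow> 1 \<le> a \<and> b \<le> q \<and> ((b = a \<and> a \<noteq> k+p+1) \<or> b = a+1)"

definition DD :: "(nat \<Rightarrow> real) \<Rightarrow> (nat \<Rightarrow> real) \<Rightarrow> nat \<Rightarrow> nat \<Rightarrow> real" where
  "DD y z a b = (if b = a then y a - z a else z b - y a)"

lemma step:
  fixes y z :: "nat \<Rightarrow> real"
  assumes p: "0<p" and k1: "1 \<le> k" and kq: "k+2*p+2 \<le> q"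
    and hy: "\<forall>j\<in>{1..q}. H2 (y j) = y (Pi_perm k p q j)"
    and hz: "\<forall>j\<in>{1..q}. H2 (z j) = z (Pi_perm (k+1) p q j)"
    and y0: "\<forall>j. 1 \<le> j \<and> j \<le> k \<longrightarrow> y j \<le> 1/3"
    and y1: "\<forall>j. k+1 \<le> j \<and> j \<le> k+2*p-1 \<longrightarrow> 1/3 < y j \<and> y j \<le> 2/3"
    and y2: "\<forall>j. k+2*p \<le> j \<and> j \<le> q \<longrightarrow> 2/3 < y j"
    and z0: "\<forall>j. 1 \<le> j \<and> j \<le> k+1 \<longrightarrow> z j \<le> 1/3"
    and z1: "\<forall>j. k+1+1 \<le> j \<and> j \<le> k+1+2*p-1 \<longrightarrow> 1/3 < z j \<and> z j \<le> 2/3"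
    and z2: "\<forall>j. k+1+2*p \<le> j \<and> j \<le> q \<longrightarrow> 2/3 < z j"
    and S: "SS k p q a b" and nb: "\<not> (a = k+2*p \<and> b = k+2*p+1)"
  shows "DD y z a b > 0 \<or> (SS k p q (Pi_perm k p q a) (Pi_perm (k+1) p q b) \<and>
           DD y z (Pi_perm k p q a) (Pi_perm (k+1) p q b) = 3 * DD y z a b)"
proof -
  have Hy: "\<And>j. 1 \<le> j \<Longrightarrow> j \<le> q \<Longrightarrow> y (Pi_perm k p q j) = H2 (y j)" using hy by auto
  have Hz: "\<And>j. 1 \<le> j \<Longrightarrow> j \<le> q \<Longrightarrow> z (Pi_perm (k+1) p q j) = H2 (z j)" using hz by auto
  have ylo: "\<And>j. 1 \<le> j \<Longrightarrow> j \<le> k \<Longrightarrow> H2 (y j) = 3 * y j" using y0 H2_lo by auto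
  have ymid: "H2 (y j) = 2 - 3 * y j" if "k+1 \<le> j" "j < k+2*p" for j
  proof -
    have "j \<le> k+2*p-1" using that by linarith
    then show ?thesis using y1 that H2_mid by auto
  qed
  have yhi: "\<And>j. k+2*p \<le> j \<Longrightarrow> j \<le> q \<Longrightarrow> H2 (y j) = 3 * y j - 2" using y2 H2_hi by auto
  have zlo: "\<And>j. 1 \<le> j \<Longrightarrow> j \<le> k+1 \<Longrightarrow> H2 (z j) = 3 * z j" using z0 H2_lo by auto
  have zmid: "H2 (z j) = 2 - 3 * z j" if "k+2 \<le> j" "j \<le> k+2*p" for j
  proof -
    have "j \<le> k+1+2*p-1" using that by linarith
    then show ?thesis using z1 that H2_mid by auto
  qed
  have zhi: "\<And>j. k+2*p+1 \<le> j \<Longrightarrow> j \<le> q \<Longrightarrow> H2 (z j) = 3 * z j - 2" using z2 H2_hi by auto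
  from S have a1: "1 \<le> a" and bq: "b \<le> q" and cs: "(b = a \<and> a \<noteq> k+p+1) \<or> b = a+1"
    by (auto simp: SS_def)
  show ?thesis
  proof (cases "b = a")
    case True
    hence ba: "b = a" and ak: "a \<noteq> k+p+1" using cs by auto
    have aq: "a \<le> q" using bq ba by simp
    consider "a \<le> k" | "a = k+1" | "k+2 \<le> a \<and> a \<le> k+p" | "k+p+2 \<le> a \<and> a \<le> k+2*p-1"
      | "a = k+2*p" | "a = k+2*p+1" | "k+2*p+2 \<le> a" using ak by linarith
    then show ?thesis
    proof cases
      case 1
      have e1: "Pi_perm k p q a = a+p" "Pi_perm (k+1) p q b = a+p" using 1 a1 ba by (auto simp: Pi_perm_def)
      have "y (a+p) = 3 * y a" using Hy[of a] ylo[of a] e1 1 a1 aq p by simp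
      moreover have "z (a+p) = 3 * z a" using Hz[of a] zlo[of a] e1 1 a1 aq ba p by simp
      ultimately show ?thesis using e1 1 a1 kq ba by (intro disjI2) (auto simp: SS_def DD_def algebra_simps; arith)
    next
      case 2
      have "y a > 1/3" using y1 2 p by auto
      moreover have "z a \<le> 1/3" using z0 2 by auto
      ultimately show ?thesis using ba by (simp add: DD_def)
    next
      case 3
      have e1: "Pi_perm k p q a = q+k+1-a" "Pi_perm (k+1) p q b = q+k+2-a" using 3 a1 ba by (auto simp: Pi_perm_def)
      have "y (q+k+1-a) = 2 - 3 * y a" using Hy[of a] ymid[of a] e1 3 a1 aq p by simp
      moreover have "z (q+k+2-a) = 2 - 3 * z a" using Hz[of a] zmid[of a] e1 3 a1 aq ba p by simp
      moreover have "q+k+2-a = (q+k+1-a) + 1" using 3 kq by linarith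
      ultimately show ?thesis using e1 3 a1 kq ba by (intro disjI2) (auto simp: SS_def DD_def algebra_simps; arith)
    next
      case 4
      have e1: "Pi_perm k p q a = 2*p+k+1-a" "Pi_perm (k+1) p q b = 2*p+k+2-a" using 4 a1 ba by (auto simp: Pi_perm_def)
      have lt: "a < k+2*p" using 4 p by linarith
      have "y (2*p+k+1-a) = 2 - 3 * y a" using Hy[of a] ymid[of a] e1 4 a1 aq p lt by simp
      moreover have "z (2*p+k+2-a) = 2 - 3 * z a" using Hz[of a] zmid[of a] e1 4 a1 aq ba p lt by simp
      moreover have "2*p+k+2-a = (2*p+k+1-a) + 1" using 4 kq by linarith
      ultimately show ?thesis using e1 4 a1 kq ba by (intro disjI2) (auto simp: SS_def DD_def algebra_simps; arith)
    next
      case 5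
      have "y a > 2/3" using y2 5 kq by auto
      moreover have "z a \<le> 2/3" using z1 5 p by auto
      ultimately show ?thesis using ba by (simp add: DD_def)
    next
      case 6
      have e1: "Pi_perm k p q a = k+p+1" "Pi_perm (k+1) p q b = 1" using 6 a1 ba p by (auto simp: Pi_perm_def)
      have A: "y (k+p+1) = 3 * y a - 2" using Hy[of a] yhi[of a] e1 6 kq by simp
      have B: "z 1 = 3 * z a - 2" using Hz[of a] zhi[of a] e1 6 kq ba by simp
      have C: "y (k+p+1) > 1/3"
      proof (cases "p = 1")
        case True thus ?thesis using y2 kq by auto
      next
        case False thus ?thesis using y1 p by auto
      qed
      have D: "z 1 \<le> 1/3" using z0 by auto
      show ?thesis using A B C D ba by (simp add: DD_def)
    next
      case 7
      have e1: "Pi_perm k p q a = a-p" "Pi_perm (k+1) p q b = a-p" using 7 a1 ba p by (auto simp: Pi_perm_def)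
      have "y (a-p) = 3 * y a - 2" using Hy[of a] yhi[of a] e1 7 a1 aq p by simp
      moreover have "z (a-p) = 3 * z a - 2" using Hz[of a] zhi[of a] e1 7 a1 aq ba p by simp
      ultimately show ?thesis using e1 7 a1 kq ba aq p by (intro disjI2) (auto simp: SS_def DD_def algebra_simps; arith)
    qed
  next
    case False
    hence ba: "b = a+1" using cs by auto
    have aq: "a+1 \<le> q" using bq ba by simp
    consider "a \<le> k" | "k+1 \<le> a \<and> a \<le> k+p" | "k+p+1 \<le> a \<and> a \<le> k+2*p-1"
      | "k+2*p+1 \<le> a" using nb ba by linarith
    then show ?thesis
    proof cases
      case 1
      have e1: "Pi_perm k p q a = a+p" "Pi_perm (k+1) p q b = a+p+1" using 1 a1 ba by (auto simp: Pi_perm_def)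
      have "y (a+p) = 3 * y a" using Hy[of a] ylo[of a] e1 1 a1 aq p by simp
      moreover have "z (a+p+1) = 3 * z (a+1)" using Hz[of "a+1"] zlo[of "a+1"] e1 1 a1 aq ba p by simp
      ultimately show ?thesis using e1 1 a1 kq ba by (intro disjI2) (auto simp: SS_def DD_def algebra_simps; arith)
    next
      case 2
      have e1: "Pi_perm k p q a = q+k+1-a" "Pi_perm (k+1) p q b = q+k+1-a" using 2 a1 ba by (auto simp: Pi_perm_def)
      have "y (q+k+1-a) = 2 - 3 * y a" using Hy[of a] ymid[of a] e1 2 a1 aq p by simp
      moreover have "z (q+k+1-a) = 2 - 3 * z (a+1)" using Hz[of "a+1"] zmid[of "a+1"] e1 2 a1 aq ba p by simp
      ultimately show ?thesis using e1 2 a1 kq ba by (intro disjI2) (auto simp: SS_def DD_def algebra_simps; arith)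
    next
      case 3
      have e1: "Pi_perm k p q a = 2*p+k+1-a" "Pi_perm (k+1) p q b = 2*p+k+1-a" using 3 a1 ba by (auto simp: Pi_perm_def)
      have lt: "a < k+2*p" "a+1 \<le> k+2*p" using 3 p by linarith+
      have "y (2*p+k+1-a) = 2 - 3 * y a" using Hy[of a] ymid[of a] e1 3 a1 aq p lt by simp
      moreover have "z (2*p+k+1-a) = 2 - 3 * z (a+1)" using Hz[of "a+1"] zmid[of "a+1"] e1 3 a1 aq ba p lt by simp
      ultimately show ?thesis using e1 3 a1 kq ba by (intro disjI2) (auto simp: SS_def DD_def algebra_simps; arith)
    next
      case 4
      have e1: "Pi_perm k p q a = a-p" "Pi_perm (k+1) p q b = a+1-p" using 4 a1 ba p by (auto simp: Pi_perm_def)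
      have "y (a-p) = 3 * y a - 2" using Hy[of a] yhi[of a] e1 4 a1 aq p by simp
      moreover have "z (a+1-p) = 3 * z (a+1) - 2" using Hz[of "a+1"] zhi[of "a+1"] e1 4 a1 aq ba p by simp
      moreover have "a+1-p = (a-p)+1" using 4 by linarith
      ultimately show ?thesis using e1 4 a1 kq ba aq p by (intro disjI2) (auto simp: SS_def DD_def algebra_simps; arith)
    qed
  qed
qed


lemma iterate:
  fixes y z :: "nat \<Rightarrow> real"
  assumes p: "0<p" and k1: "1 \<le> k" and kq: "k+2*p+2 \<le> q"
    and hy: "\<forall>j\<in>{1..q}. H2 (y j) = y (Pi_perm k p q j)"
    and hz: "\<forall>j\<in>{1..q}. H2 (z j) = z (Pi_perm (k+1) p q j)"
    and y0: "\<forall>j. 1 \<le> j \<and> j \<le> k \<longrightarrow> y j \<le> 1/3"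
    and y1: "\<forall>j. k+1 \<le> j \<and> j \<le> k+2*p-1 \<longrightarrow> 1/3 < y j \<and> y j \<le> 2/3"
    and y2: "\<forall>j. k+2*p \<le> j \<and> j \<le> q \<longrightarrow> 2/3 < y j"
    and z0: "\<forall>j. 1 \<le> j \<and> j \<le> k+1 \<longrightarrow> z j \<le> 1/3"
    and z1: "\<forall>j. k+1+1 \<le> j \<and> j \<le> k+1+2*p-1 \<longrightarrow> 1/3 < z j \<and> z j \<le> 2/3"
    and z2: "\<forall>j. k+1+2*p \<le> j \<and> j \<le> q \<longrightarrow> 2/3 < z j"
    and ry: "\<forall>j\<in>{1..q}. 0 \<le> y j \<and> y j \<le> 1"
    and rz: "\<forall>j\<in>{1..q}. 0 \<le> z j \<and> z j \<le> 1"
    and st: "SS k p q s t" and d0: "DD y z s t < 0"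
    and nobad: "\<And>n. SS k p q ((Pi_perm k p q ^^ n) s) ((Pi_perm (k+1) p q ^^ n) t) \<Longrightarrow>
        DD y z ((Pi_perm k p q ^^ n) s) ((Pi_perm (k+1) p q ^^ n) t) = 3^n * DD y z s t \<Longrightarrow>
        \<not> ((Pi_perm k p q ^^ n) s = k+2*p \<and> (Pi_perm (k+1) p q ^^ n) t = k+2*p+1)"
  shows False
proof -
  define d where "d = DD y z s t"
  define A where "A n = (Pi_perm k p q ^^ n) s" for n
  define B where "B n = (Pi_perm (k+1) p q ^^ n) t" for n
  have inv: "SS k p q (A n) (B n) \<and> DD y z (A n) (B n) = 3^n * d" for n
  proof (induction n)
    case 0
    then show ?case using st by (simp add: A_def B_def d_def)
  next
    case (Suc n)
    have nb: "\<not> (A n = k+2*p \<and> B n = k+2*p+1)" using nobad[of n] Suc.IH by (simp add: A_def B_def d_def)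
    have "DD y z (A n) (B n) > 0 \<or> (SS k p q (Pi_perm k p q (A n)) (Pi_perm (k+1) p q (B n)) \<and>
           DD y z (Pi_perm k p q (A n)) (Pi_perm (k+1) p q (B n)) = 3 * DD y z (A n) (B n))"
      by (rule step[OF p k1 kq hy hz y0 y1 y2 z0 z1 z2]) (use Suc.IH nb in auto)
    moreover have "\<not> DD y z (A n) (B n) > 0"
    proof -
      have "(3::real)^n * d \<le> 0" using d0 by (simp add: d_def mult_nonneg_nonpos)
      thus ?thesis using Suc.IH by simp
    qed
    moreover have "A (Suc n) = Pi_perm k p q (A n)" "B (Suc n) = Pi_perm (k+1) p q (B n)"
      by (simp_all add: A_def B_def)
    ultimately show ?case using Suc.IH by simp
  qed
  have bnd: "\<bar>DD y z a b\<bar> \<le> 1" if "SS k p q a b" for a b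
  proof -
    from that have a1: "1 \<le> a" "a \<le> q" "1 \<le> b" "b \<le> q" by (auto simp: SS_def)
    then have "0 \<le> y a" "y a \<le> 1" "0 \<le> z a" "z a \<le> 1" "0 \<le> z b" "z b \<le> 1"
      using ry rz by auto
    then show ?thesis by (auto simp: DD_def abs_le_iff)
  qed
  have "d < 0" using d0 by (simp add: d_def)
  obtain n where n: "1 / \<bar>d\<bar> < 3^n" using real_arch_pow[of 3 "1 / \<bar>d\<bar>"] by auto
  have "\<bar>3^n * d\<bar> \<le> 1" using inv[of n] bnd by metis
  hence "3^n * \<bar>d\<bar> \<le> 1" by (simp add: abs_mult)
  moreover have "1 < 3^n * \<bar>d\<bar>" using n \<open>d < 0\<close> by (simp add: field_simps)
  ultimately show False by simp
qed


definition phi :: "nat \<Rightarrow> nat \<Rightarrow> nat \<Rightarrow> nat \<Rightarrow> nat" where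
  "phi r p q j = (if j \<le> r+p then j else q+r+p+1-j)"

lemma phi_step:
  assumes "1 \<le> j" "j \<le> q" "r+2*p \<le> q" "0<p"
  shows "phi r p q (Pi_perm r p q j) mod q = (phi r p q j + p) mod q"
proof -
  consider "j \<le> r" | "r+1 \<le> j \<and> j \<le> r+p" | "r+p+1 \<le> j \<and> j \<le> r+2*p" | "r+2*p+1 \<le> j"
    by linarith
  then show ?thesis
  proof cases
    case 1 thus ?thesis using assms by (simp add: Pi_perm_def phi_def)
  next
    case 2
    have e: "Pi_perm r p q j = q+r+1-j" using 2 by (simp add: Pi_perm_def)
    have "\<not> (q+r+1-j \<le> r+p)" using 2 assms by linarith
    hence "phi r p q (q+r+1-j) = q+r+p+1-(q+r+1-j)" by (simp add: phi_def)
    moreover have "q+r+p+1-(q+r+1-j) = j + p" using 2 assms by linarith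
    ultimately have "phi r p q (q+r+1-j) = j + p" by simp
    moreover have "phi r p q j = j" using 2 by (simp add: phi_def)
    ultimately show ?thesis using e by simp
  next
    case 3
    have e: "Pi_perm r p q j = 2*p+r+1-j" using 3 by (simp add: Pi_perm_def)
    have "2*p+r+1-j \<le> r+p" using 3 assms by linarith
    hence "phi r p q (2*p+r+1-j) = 2*p+r+1-j" by (simp add: phi_def)
    moreover have "phi r p q j + p = q + (2*p+r+1-j)" using 3 assms by (simp add: phi_def)
    ultimately show ?thesis using e by simp
  next
    case 4
    have e: "Pi_perm r p q j = j - p" using 4 by (simp add: Pi_perm_def)
    have "phi r p q (j-p) = q+r+p+1-(j-p)" using 4 assms by (simp add: phi_def)
    moreover have "q+r+p+1-(j-p) = (q+r+p+1-j) + p" using 4 assms by simp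
    moreover have "phi r p q j = q+r+p+1-j" using 4 by (simp add: phi_def)
    ultimately have "phi r p q (Pi_perm r p q j) = phi r p q j + p" unfolding e by linarith
    thus ?thesis by simp
  qed
qed

lemma phi_iter:
  assumes "1 \<le> j" "j \<le> q" "r+2*p \<le> q" "0<p"
  shows "phi r p q ((Pi_perm r p q ^^ n) j) mod q = (phi r p q j + n*p) mod q \<and>
         1 \<le> (Pi_perm r p q ^^ n) j \<and> (Pi_perm r p q ^^ n) j \<le> q"
proof (induction n)
  case 0 thus ?case using assms by simp
next
  case (Suc n)
  let ?x = "(Pi_perm r p q ^^ n) j"
  have r: "1 \<le> Pi_perm r p q ?x \<and> Pi_perm r p q ?x \<le> q" using Pi_range Suc.IH assms by blast
  have "phi r p q (Pi_perm r p q ?x) mod q = (phi r p q ?x + p) mod q"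
    using phi_step Suc.IH assms by blast
  also have "\<dots> = (phi r p q ?x mod q + p) mod q" by (simp add: mod_add_left_eq)
  also have "\<dots> = ((phi r p q j + n*p) mod q + p) mod q" using Suc.IH by simp
  also have "\<dots> = (phi r p q j + n*p + p) mod q" by (simp add: mod_add_left_eq)
  also have "\<dots> = (phi r p q j + Suc n * p) mod q" by (simp add: algebra_simps)
  finally show ?case using r by simp
qed

lemma mod_suc_neq: "(2::nat) \<le> q \<Longrightarrow> (x + 1) mod q \<noteq> x mod q"
  by (simp add: mod_Suc)

lemma extract_pt:
  assumes P: "is_P r p q P" and p: "0<p" and r1: "1 \<le> r" and rq: "r+2*p+1 \<le> q"
  obtains x where "strict_mono_on {1..q} x" "P = x ` {1..q}"
    "\<forall>j\<in>{1..q}. H2 (x j) = x (Pi_perm r p q j)" "\<forall>j\<in>{1..q}. 0 \<le> x j \<and> x j \<le> 1"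
    "x (r+1) \<in> I1" "x (r+2*p) \<in> I2" "H2 (abs_max_pt P) = x q" "H2 (abs_min_pt P) = x 1"
    "is_cycle P q"
proof -
  have nr: "\<not> (r = 0 \<or> r = q - 2*p)" using r1 rq by auto
  from P nr have cyc: "is_cycle P q" and ex: "exhibits_pattern P r p q"
    and loc: "abs_max_pt P \<in> I1" "abs_min_pt P \<in> I2" by (auto simp: is_P_def)
  from ex obtain x where mono: "strict_mono_on {1..q} x" and Px: "P = x ` {1..q}"
    and hx: "\<forall>j\<in>{1..q}. H2 (x j) = x (Pi_perm r p q j)" by (auto simp: exhibits_pattern_def)
  have fin: "finite P" and sub: "P \<subseteq> {0..1}" using cyc by (auto simp: is_cycle_def)
  have rng: "\<forall>j\<in>{1..q}. 0 \<le> x j \<and> x j \<le> 1" using sub Px by auto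
  have mono': "\<And>i j. 1 \<le> i \<Longrightarrow> i < j \<Longrightarrow> j \<le> q \<Longrightarrow> x i < x j"
    using mono by (auto simp: strict_mono_on_def)
  have inj: "\<And>i j. 1 \<le> i \<Longrightarrow> i \<le> q \<Longrightarrow> 1 \<le> j \<Longrightarrow> j \<le> q \<Longrightarrow> x i = x j \<Longrightarrow> i = j"
    by (metis linorder_neq_iff mono' order_less_irrefl)
  have MaxP: "Max P = x q"
  proof (rule Max_eqI[OF fin])
    fix t assume "t \<in> P"
    then obtain i where "i \<in> {1..q}" "t = x i" using Px by auto
    thus "t \<le> x q" using mono'[of i q] by (cases "i = q") auto
  next
    show "x q \<in> P" using Px rq by auto
  qed
  have MinP: "Min P = x 1"
  proof (rule Min_eqI[OF fin])
    fix t assume "t \<in> P"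
    then obtain i where "i \<in> {1..q}" "t = x i" using Px by auto
    thus "x 1 \<le> t" using mono'[of 1 i] by (cases "i = 1") auto
  next
    show "x 1 \<in> P" using Px rq by auto
  qed
  have sM: "Pi_perm r p q (r+1) = q" using rq p by (simp add: Pi_perm_def)
  have sm: "Pi_perm r p q (r+2*p) = 1" using rq p by (simp add: Pi_perm_def)
  have amax: "abs_max_pt P = x (r+1)"
    unfolding abs_max_pt_def
  proof (rule the_equality)
    show "x (r+1) \<in> P \<and> H2 (x (r+1)) = Max P" using Px hx sM MaxP rq by auto
  next
    fix a assume a: "a \<in> P \<and> H2 a = Max P"
    then obtain j where j: "j \<in> {1..q}" "a = x j" using Px by auto
    have "x (Pi_perm r p q j) = x q" using a j hx MaxP by auto
    moreover have "1 \<le> Pi_perm r p q j \<and> Pi_perm r p q j \<le> q" using Pi_range[of j q r p] j rq p by auto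
    ultimately have "Pi_perm r p q j = q" using inj rq by auto
    hence "j = r+1" using j rq p by (auto simp: Pi_perm_def split: if_splits)
    thus "a = x (r+1)" using j by simp
  qed
  have amin: "abs_min_pt P = x (r+2*p)"
    unfolding abs_min_pt_def
  proof (rule the_equality)
    show "x (r+2*p) \<in> P \<and> H2 (x (r+2*p)) = Min P" using Px hx sm MinP rq r1 by auto
  next
    fix a assume a: "a \<in> P \<and> H2 a = Min P"
    then obtain j where j: "j \<in> {1..q}" "a = x j" using Px by auto
    have "x (Pi_perm r p q j) = x 1" using a j hx MinP by auto
    moreover have "1 \<le> Pi_perm r p q j \<and> Pi_perm r p q j \<le> q" using Pi_range[of j q r p] j rq p by auto
    ultimately have "Pi_perm r p q j = 1" using inj rq by auto
    hence "j = r+2*p" using j rq p by (auto simp: Pi_perm_def split: if_splits)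
    thus "a = x (r+2*p)" using j by simp
  qed
  show ?thesis
  proof (rule that[OF mono Px hx rng])
    show "x (r+1) \<in> I1" using loc amax by simp
    show "x (r+2*p) \<in> I2" using loc amin by simp
    show "H2 (abs_max_pt P) = x q" using amax hx sM rq by auto
    show "H2 (abs_min_pt P) = x 1" using amin hx sm rq r1 by auto
    show "is_cycle P q" by (rule cyc)
  qed
qed

lemma same_set:
  assumes c1: "is_cycle P q" and c2: "is_cycle Q q" and a: "a \<in> P" "a \<in> Q"
  shows "P = Q"
proof -
  have clos: "(H2 ^^ n) a \<in> R" if "is_cycle R q" "a \<in> R" for R n
  proof (induction n)
    case 0 thus ?case using that by simp
  next
    case (Suc n)
    have "H2 ` R = R" using that by (simp add: is_cycle_def)
    thus ?case using Suc.IH by (auto intro: image_eqI)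
  qed
  have "P \<subseteq> Q"
  proof
    fix t assume "t \<in> P"
    then obtain n where "(H2 ^^ n) a = t" using c1 a(1) unfolding is_cycle_def by blast
    thus "t \<in> Q" using clos[OF c2 a(2)] by blast
  qed
  moreover have "Q \<subseteq> P"
  proof
    fix t assume "t \<in> Q"
    then obtain n where "(H2 ^^ n) a = t" using c2 a(2) unfolding is_cycle_def by blast
    thus "t \<in> P" using clos[OF c1 a(1)] by blast
  qed
  ultimately show ?thesis by blast
qed

lemma enum_unique:
  fixes x x' :: "nat \<Rightarrow> real"
  assumes m1: "strict_mono_on {1..q} x" and m2: "strict_mono_on {1..q} x'"
    and eq: "x ` {1..q} = x' ` {1..q}"
  shows "j \<in> {1..q} \<Longrightarrow> x j = x' j"
proof (induction j rule: less_induct)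
  case (less j)
  have mo1: "\<And>i j. i \<in> {1..q} \<Longrightarrow> j \<in> {1..q} \<Longrightarrow> i < j \<Longrightarrow> x i < x j"
    using m1 by (auto simp: strict_mono_on_def)
  have mo2: "\<And>i j. i \<in> {1..q} \<Longrightarrow> j \<in> {1..q} \<Longrightarrow> i < j \<Longrightarrow> x' i < x' j"
    using m2 by (auto simp: strict_mono_on_def)
  show ?case
  proof (rule ccontr)
    assume ne: "x j \<noteq> x' j"
    show False
    proof (cases "x j < x' j")
      case True
      obtain i where i: "i \<in> {1..q}" "x j = x' i" using eq less.prems by (metis image_eqI imageE)
      show False
      proof (cases "i < j")
        case True
        hence "x i = x' i" using less.IH i by simp
        hence "x i = x j" using i by simp
        moreover have "x i < x j" using mo1 i less.prems True by blast
        ultimately show False by simp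
      next
        case False
        hence "i = j \<or> j < i" by auto
        thus False using mo2[of j i] i less.prems \<open>x j < x' j\<close> ne by auto
      qed
    next
      case False
      hence lt: "x' j < x j" using ne by simp
      obtain i where i: "i \<in> {1..q}" "x' j = x i" using eq less.prems by (metis image_eqI imageE)
      show False
      proof (cases "i < j")
        case True
        hence "x i = x' i" using less.IH i by simp
        hence "x' i = x' j" using i by simp
        moreover have "x' i < x' j" using mo2 i less.prems True by blast
        ultimately show False by simp
      next
        case False
        hence "i = j \<or> j < i" by auto
        thus False using mo1[of j i] i less.prems lt ne by auto
      qed
    qed
  qed
qed


theorem mainTheorem12:
  fixes p q k :: nat and Pk Pk1 :: "real set"
  assumes "coprime p q" and "0 < p" and "2 * p < q"
    and "1 \<le> k" and "k + 2 \<le> q - 2 * p"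
    and "is_P k p q Pk" and "is_P (k + 1) p q Pk1"
  shows "floats_above Pk Pk1 \<and>
         H2 (abs_max_pt Pk) > H2 (abs_max_pt Pk1) \<and> H2 (abs_min_pt Pk) > H2 (abs_min_pt Pk1)"
proof -
  have p: "0 < p" and k1: "1 \<le> k" using assms by auto
  have kq: "k+2*p+2 \<le> q" using assms by linarith
  obtain y where ymono: "strict_mono_on {1..q} y" and Py: "Pk = y ` {1..q}"
    and hy: "\<forall>j\<in>{1..q}. H2 (y j) = y (Pi_perm k p q j)" and ry: "\<forall>j\<in>{1..q}. 0 \<le> y j \<and> y j \<le> 1"
    and yM: "y (k+1) \<in> I1" and ym: "y (k+2*p) \<in> I2" and yA: "H2 (abs_max_pt Pk) = y q"
    and yB: "H2 (abs_min_pt Pk) = y 1" and cy: "is_cycle Pk q"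
    using extract_pt[OF assms(6) p k1] kq by auto
  obtain z where zmono: "strict_mono_on {1..q} z" and Pz: "Pk1 = z ` {1..q}"
    and hz: "\<forall>j\<in>{1..q}. H2 (z j) = z (Pi_perm (k+1) p q j)" and rz: "\<forall>j\<in>{1..q}. 0 \<le> z j \<and> z j \<le> 1"
    and zM: "z (k+1+1) \<in> I1" and zm: "z (k+1+2*p) \<in> I2" and zA: "H2 (abs_max_pt Pk1) = z q"
    and zB: "H2 (abs_min_pt Pk1) = z 1" and cz: "is_cycle Pk1 q"
    using extract_pt[OF assms(7) p] k1 kq by auto
  have yb: "\<forall>j. 1 \<le> j \<and> j \<le> k \<longrightarrow> y j \<le> 1/3"
    "\<forall>j. k+1 \<le> j \<and> j \<le> k+2*p-1 \<longrightarrow> 1/3 < y j \<and> y j \<le> 2/3"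
    "\<forall>j. k+2*p \<le> j \<and> j \<le> q \<longrightarrow> 2/3 < y j"
    using blocks[OF p k1 _ ymono ry hy yM ym] kq by auto
  have zb: "\<forall>j. 1 \<le> j \<and> j \<le> k+1 \<longrightarrow> z j \<le> 1/3"
    "\<forall>j. k+1+1 \<le> j \<and> j \<le> k+1+2*p-1 \<longrightarrow> 1/3 < z j \<and> z j \<le> 2/3"
    "\<forall>j. k+1+2*p \<le> j \<and> j \<le> q \<longrightarrow> 2/3 < z j"
    using blocks[OF p _ _ zmono rz hz zM zm] kq by auto
  have neq: False if "a \<in> {1..q}" "b \<in> {1..q}" "y a = z b" for a b
  proof -
    have "y a \<in> Pk" unfolding Py using that(1) by (rule imageI)
    moreover have "y a \<in> Pk1" unfolding Pz that(3) using that(2) by (rule imageI)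
    ultimately have "Pk = Pk1" using same_set[OF cy cz] by blast
    hence yz: "\<And>j. j \<in> {1..q} \<Longrightarrow> y j = z j" using enum_unique[OF ymono zmono] Py Pz by metis
    have "H2 (y (k+1)) = y q" using hy[rule_format, of "k+1"] kq p by (simp add: Pi_perm_def)
    moreover have "H2 (z (k+1)) = z (k+1+p)" using hz[rule_format, of "k+1"] kq p by (simp add: Pi_perm_def)
    ultimately have "y q = y (k+1+p)" using yz[of "k+1"] yz[of "k+1+p"] kq by auto
    moreover have "y (k+1+p) < y q" using ymono kq unfolding strict_mono_on_def by auto
    ultimately show False by simp
  qed
  have sel: "Pi_perm k p q (k+2*p) = 1" "Pi_perm (k+1) p q (k+2*p+1) = 1" using p by (auto simp: Pi_perm_def)
  have g1: "y q > z q"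
  proof (rule ccontr)
    assume "\<not> y q > z q"
    moreover have "y q \<noteq> z q" using neq[of q q] kq by auto
    ultimately have d0: "DD y z q q < 0" by (simp add: DD_def)
    have st: "SS k p q q q" using kq by (simp add: SS_def)
    show False
    proof (rule iterate[OF p k1 kq hy hz yb zb ry rz st d0])
      fix n
      let ?A = "(Pi_perm k p q ^^ n) q" and ?B = "(Pi_perm (k+1) p q ^^ n) q"
      show "\<not> (?A = k+2*p \<and> ?B = k+2*p+1)"
      proof
        assume bad: "?A = k+2*p \<and> ?B = k+2*p+1"
        have i1: "phi k p q ?A mod q = (phi k p q q + n*p) mod q" using phi_iter[of q q k p n] kq p by auto
        have i2: "phi (k+1) p q ?B mod q = (phi (k+1) p q q + n*p) mod q" using phi_iter[of q q "k+1" p n] kq p by auto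
        have "phi k p q (k+2*p) = q+1-p" using p kq by (simp add: phi_def)
        moreover have "phi (k+1) p q (k+2*p+1) = q+1-p" using p kq by (simp add: phi_def)
        moreover have "phi k p q q = k+p+1" using p kq by (simp add: phi_def)
        moreover have "phi (k+1) p q q = (k+p+1) + 1" using p kq by (simp add: phi_def)
        ultimately have "(k+p+1 + n*p) mod q = ((k+p+1 + n*p) + 1) mod q" using i1 i2 bad by (simp add: algebra_simps)
        thus False using mod_suc_neq[of q "k+p+1+n*p"] kq by simp
      qed
    qed
  qed
  have g2: "y 1 > z 1"
  proof (rule ccontr)
    assume "\<not> y 1 > z 1"
    moreover have "y 1 \<noteq> z 1" using neq[of 1 1] kq by auto
    ultimately have d0: "DD y z 1 1 < 0" by (simp add: DD_def)
    have st: "SS k p q 1 1" using kq k1 by (simp add: SS_def)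
    show False
    proof (rule iterate[OF p k1 kq hy hz yb zb ry rz st d0])
      fix n
      let ?A = "(Pi_perm k p q ^^ n) 1" and ?B = "(Pi_perm (k+1) p q ^^ n) 1"
      assume dd: "DD y z ?A ?B = 3^n * DD y z 1 1"
      show "\<not> (?A = k+2*p \<and> ?B = k+2*p+1)"
      proof
        assume bad: "?A = k+2*p \<and> ?B = k+2*p+1"
        have e: "z (k+2*p+1) - y (k+2*p) = 3^n * (y 1 - z 1)" using dd bad by (simp add: DD_def)
        have "y 1 = H2 (y (k+2*p))" using hy[rule_format, of "k+2*p"] sel kq k1 by simp
        also have "\<dots> = 3 * y (k+2*p) - 2" using yb(3) kq by (intro H2_hi) auto
        finally have a: "y 1 = 3 * y (k+2*p) - 2" .
        have "z 1 = H2 (z (k+2*p+1))" using hz[rule_format, of "k+2*p+1"] sel kq k1 by simp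
        also have "\<dots> = 3 * z (k+2*p+1) - 2" using zb(3) kq by (intro H2_hi) auto
        finally have b: "z 1 = 3 * z (k+2*p+1) - 2" .
        have "y 1 - z 1 = -3 * (3^n * (y 1 - z 1))" using a b e by (simp add: algebra_simps)
        hence "(y 1 - z 1) * (1 + 3 * 3^n) = 0" by (simp add: algebra_simps)
        moreover have "(1::real) + 3 * 3^n \<noteq> 0" by (smt (verit) zero_le_power)
        ultimately have "y 1 = z 1" by simp
        thus False using d0 by (simp add: DD_def)
      qed
    qed
  qed
  show ?thesis using g1 g2 yA yB zA zB by (simp add: floats_above_def)
qed

end
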